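(* Let $b>2$ and let $\varphi:B(b)/\mathbb{Z}\to\mathbb{C}/\mathbb{Z}$ be a conformal embedding with $\varphi(0)=0$ and $\varphi_*(1)=1$ on fundamental groups. For every straight cylinder $T$ of modulus $1$ contained in $B(b-2)/\mathbb{Z}$, the image $\varphi(T)$ is contained in a straight cylinder of modulus at most $2$.
   Context: $B(b)=\{z\in\mathbb{C}:|\operatorname{Im}z|<b\}$ and $B(b)/\mathbb{Z}$ is its quotient by $z\mapsto z+1$. Fundamental groups of $B(b)/\mathbb{Z}$ and $\mathbb{C}/\mathbb{Z}$ are identified with $\mathbb{Z}$. A straight cylinder in $\mathbb{C}/\mathbb{Z}$ is a set of the form $\{z:\operatorname{Im}z\in I\}/\mathbb{Z}$ for an interval $I\subset\mathbb{R}$; its modulus is the length of $I$. *)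

theory Defs
  imports "HOL-Complex_Analysis.Complex_Analysis"
begin

text \<open>The band B(b) = {z. |Im z| < b}; we work with lifts to the universal cover
  of the annuli, i.e. Z-periodic sets and maps commuting with z |-> z+1.\<close>
definition band :: "real \<Rightarrow> complex set" where
  "band b = {z. \<bar>Im z\<bar> < b}"

text \<open>Lift of a conformal embedding phi : B(b)/Z -> C/Z with phi(0)=0 and
  phi_*(1)=1: holomorphic F on B(b) with F(z+1)=F(z)+1, F 0 = 0, and injective
  modulo Z.\<close>
definition lift_conformal_embedding :: "real \<Rightarrow> (complex \<Rightarrow> complex) \<Rightarrow> bool" where
  "lift_conformal_embedding b F \<longleftrightarrow>
     F holomorphic_on band b \<and>
     (\<forall>z\<in>band b. F (z + 1) = F z + 1) \<and>
     F 0 = 0 \<and>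
     (\<forall>z\<in>band b. \<forall>w\<in>band b. F z - F w \<in> \<int> \<longrightarrow> z - w \<in> \<int>)"

definition bdd_interval :: "real set \<Rightarrow> bool" where
  "bdd_interval I \<longleftrightarrow> is_interval I \<and> I \<noteq> {} \<and> bounded I"

definition straight_cyl :: "real set \<Rightarrow> complex set" where
  "straight_cyl I = {z. Im z \<in> I}"

definition cyl_modulus :: "real set \<Rightarrow> real" where
  "cyl_modulus I = Sup I - Inf I"

end

theory Submission
  imports Defs
begin

lemma open_band: "open (band b)"
  unfolding band_def by (intro open_Collect_less continuous_intros)

lemma band_shift: "z \<in> band b \<Longrightarrow> z + of_int n \<in> band b"
  by (simp add: band_def)

lemma band_shift_nat: "z \<in> band b \<Longrightarrow> z + of_nat n \<in> band b"
  by (simp add: band_def)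

lemma F_shift_nat:
  fixes F :: "complex \<Rightarrow> complex"
  assumes "\<forall>z\<in>band b. F (z + 1) = F z + 1" "z \<in> band b"
  shows "F (z + of_nat n) = F z + of_nat n"
proof (induction n)
  case 0 then show ?case by simp
next
  case (Suc n)
  have "z + of_nat n \<in> band b" using assms(2) by (rule band_shift_nat)
  then have "F (z + of_nat n + 1) = F (z + of_nat n) + 1" using assms(1) by blast
  moreover have "z + of_nat (Suc n) = z + of_nat n + 1" by simp
  ultimately show ?case using Suc by (simp only:) simp
qed

lemma F_shift_int:
  fixes F :: "complex \<Rightarrow> complex"
  assumes "\<forall>z\<in>band b. F (z + 1) = F z + 1" "z \<in> band b"
  shows "F (z + of_int n) = F z + of_int n"
proof (cases "n \<ge> 0")
  case True
  then have "(of_int n :: complex) = of_nat (nat n)" by simp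
  then show ?thesis using F_shift_nat[OF assms] by simp
next
  case False
  define w where "w = z + of_int n"
  have w: "w \<in> band b" unfolding w_def using assms(2) by (rule band_shift)
  have e: "(of_nat (nat (-n)) :: complex) = - of_int n" using False by simp
  have "F (w + of_nat (nat (-n))) = F w + of_nat (nat (-n))" using F_shift_nat[OF assms(1) w] .
  then have "F z = F w - of_int n" using e by (simp add: w_def)
  then show ?thesis by (simp add: w_def)
qed

lemma lce_int_diff:
  assumes L: "lift_conformal_embedding b F" and z1: "z1 \<in> band b" and z2: "z2 \<in> band b"
    and d: "F z2 - F z1 \<in> \<int>"
  shows "z2 - z1 = F z2 - F z1"
proof -
  have "z2 - z1 \<in> \<int>" using L z1 z2 d unfolding lift_conformal_embedding_def by blast
  then obtain n where n: "z2 - z1 = of_int n" by (auto elim: Ints_cases)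
  have "z2 = z1 + of_int n" using n by (simp add: algebra_simps)
  moreover have "F (z1 + of_int n) = F z1 + of_int n"
    using L z1 unfolding lift_conformal_embedding_def by (intro F_shift_int) auto
  ultimately show ?thesis using n by simp
qed

lemma deriv_bound:
  assumes L: "lift_conformal_embedding b F" and z0: "\<bar>Im z0\<bar> \<le> b - 1"
  shows "norm (deriv F z0) < 18"
proof (rule ccontr)
  assume "\<not> ?thesis"
  then have big: "norm (deriv F z0) \<ge> 18" by simp
  have sub: "ball z0 1 \<subseteq> band b"
  proof
    fix w assume "w \<in> ball z0 1"
    then have "norm (w - z0) < 1" by (simp add: dist_norm norm_minus_commute)
    moreover have "\<bar>Im w - Im z0\<bar> \<le> norm (w - z0)" using abs_Im_le_cmod[of "w - z0"] by simp
    ultimately show "w \<in> band b" using z0 by (simp add: band_def)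
  qed
  have hol: "F holomorphic_on ball z0 1"
    using L sub unfolding lift_conformal_embedding_def by (blast intro: holomorphic_on_subset)
  obtain c where c: "ball c (3/2) \<subseteq> F ` ball z0 1"
    using Bloch[OF hol, of "3/2"] big by auto
  have "c - 1 \<in> ball c (3/2)" "c + 1 \<in> ball c (3/2)" by (auto simp: dist_norm)
  then have "c - 1 \<in> F ` ball z0 1" "c + 1 \<in> F ` ball z0 1" using c by blast+
  then obtain z1 z2 where z1: "z1 \<in> ball z0 1" "F z1 = c - 1" and z2: "z2 \<in> ball z0 1" "F z2 = c + 1"
    by (auto elim!: imageE)
  have "F z2 - F z1 = 2" using z1 z2 by simp
  moreover have "z1 \<in> band b" "z2 \<in> band b" using z1 z2 sub by blast+
  ultimately have "z2 - z1 = 2" using lce_int_diff[OF L, of z1 z2] by simp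
  moreover have "dist z2 z1 < 2"
    using z1 z2 dist_triangle_less_add[of z2 z0 1 z1 1] by (simp add: dist_commute)
  ultimately show False by (simp add: dist_norm)
qed

lemma deriv_periodic:
  fixes F :: "complex \<Rightarrow> complex"
  assumes L: "lift_conformal_embedding b F" and w: "w \<in> band b"
  shows "deriv F (w + 1) = deriv F w"
proof -
  have hol: "F holomorphic_on band b" and per: "\<forall>z\<in>band b. F (z+1) = F z + 1"
    using L unfolding lift_conformal_embedding_def by auto
  have w1: "w + 1 \<in> band b" using band_shift[OF w, of 1] by simp
  have d1: "(F has_field_derivative deriv F (w+1)) (at (w+1))"
    by (rule holomorphic_derivI[OF hol open_band w1])
  have d0: "(F has_field_derivative deriv F w) (at w)"
    by (rule holomorphic_derivI[OF hol open_band w])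
  have "((\<lambda>\<zeta>. F (\<zeta>+1)) has_field_derivative deriv F (w+1) * 1) (at w)"
    by (rule DERIV_chain2[of F "deriv F (w+1)" "\<lambda>\<zeta>. \<zeta> + 1" w, simplified, OF d1]) (auto intro!: derivative_eq_intros)
  then have "((\<lambda>\<zeta>. F (\<zeta>+1)) has_field_derivative deriv F (w+1)) (at w)" by simp
  then have "((\<lambda>\<zeta>. F \<zeta> + 1) has_field_derivative deriv F (w+1)) (at w)"
    by (rule has_field_derivative_transform_within_open[OF _ open_band w]) (use per in auto)
  moreover have "((\<lambda>\<zeta>. F \<zeta> + 1) has_field_derivative deriv F w) (at w)"
    using d0 by (auto intro!: derivative_eq_intros)
  ultimately show ?thesis by (rule DERIV_unique)
qed

lemma hint_zero:
  fixes F :: "complex \<Rightarrow> complex"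
  assumes L: "lift_conformal_embedding b F" and a: "a \<in> band b" and c: "c = a + 1 \<or> a = c + 1"
  shows "((\<lambda>w. deriv F w - 1) has_contour_integral 0) (linepath a c)"
proof -
  have hol: "F holomorphic_on band b" and per: "\<forall>z\<in>band b. F (z+1) = F z + 1"
    using L unfolding lift_conformal_embedding_def by auto
  have imc: "Im c = Im a" using c by auto
  have seg: "closed_segment a c \<subseteq> band b"
  proof
    fix w assume "w \<in> closed_segment a c"
    then have "Im w = Im a" using closed_segment_same_Im[OF imc[symmetric]] by auto
    then show "w \<in> band b" using a by (simp add: band_def)
  qed
  have "((\<lambda>w. deriv F w - 1) has_contour_integral ((F (pathfinish (linepath a c)) - pathfinish (linepath a c))
          - (F (pathstart (linepath a c)) - pathstart (linepath a c)))) (linepath a c)"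
  proof (rule contour_integral_primitive[where S = "band b"])
    fix x assume "x \<in> band b"
    then have "(F has_field_derivative deriv F x) (at x within band b)"
      using hol open_band by (intro holomorphic_derivI)
    then show "((\<lambda>w. F w - w) has_field_derivative deriv F x - 1) (at x within band b)"
      by (auto intro!: derivative_eq_intros)
  qed (use seg in auto)
  moreover have "(F c - c) - (F a - a) = 0"
  proof (cases "c = a + 1")
    case True then show ?thesis using per a by auto
  next
    case False
    then have "a = c + 1" using c by blast
    moreover have "c \<in> band b" using a imc by (simp add: band_def)
    ultimately show ?thesis using per by auto
  qed
  ultimately show ?thesis by simp
qed

lemma K_bound:
  fixes E q :: complex and T0 :: real
  assumes "norm q \<le> T0 * norm E" "0 \<le> T0" "T0 < 1" "E \<noteq> 0"
  shows "norm (2 * q / (E - q)) \<le> 2 * T0 / (1 - T0)"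
proof -
  have nE: "norm E > 0" using assms(4) by simp
  have "norm (E - q) \<ge> norm E - norm q" by (rule norm_triangle_ineq2)
  then have d: "norm (E - q) \<ge> (1 - T0) * norm E" using assms(1) by (simp add: algebra_simps)
  have pos: "(1 - T0) * norm E > 0" using nE assms(3) by simp
  have "norm (2 * q / (E - q)) = 2 * norm q / norm (E - q)" by (simp add: norm_divide norm_mult)
  also have "\<dots> \<le> (2 * (T0 * norm E)) / ((1 - T0) * norm E)"
    using assms(1,2) d pos by (intro frac_le) auto
  also have "\<dots> = 2 * T0 / (1 - T0)" using nE by simp
  finally show ?thesis .
qed

lemma E_periodic: "exp (2 * pi * \<i> * (w + 1)) = exp (2 * pi * \<i> * w)"
proof -
  have "exp (2 * pi * \<i> * (w + 1)) = exp (2 * pi * \<i> * w) * exp (2 * pi * \<i>)"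
    by (simp add: distrib_left exp_add)
  then show ?thesis by simp
qed

lemma decay:
  fixes F :: "complex \<Rightarrow> complex"
  assumes b2: "b > 2" and L: "lift_conformal_embedding b F" and z: "\<bar>Im z\<bar> < b - 2"
  shows "norm (deriv F z - 1) \<le> 38 * exp(-2*pi) / (1 - exp(-2*pi))"
proof -
  define h where "h = (\<lambda>w. deriv F w - 1)"
  define q where "q = exp(2*pi*\<i>*z)"
  define E where "E = (\<lambda>w. exp(2*pi*\<i>*w))"
  define K where "K = (\<lambda>w. pi*\<i>*(E w + q)/(E w - q))"
  define f where "f = (\<lambda>w. h w * K w)"
  define x where "x = Re z"
  define \<beta> where "\<beta> = b - 1"
  define a1 where "a1 = Complex (x - 1/2) (-\<beta>)"
  define a2 where "a2 = Complex (x + 1/2) (-\<beta>)"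
  define a3 where "a3 = Complex (x + 1/2) \<beta>"
  define a4 where "a4 = Complex (x - 1/2) \<beta>"
  define S where "S = box (Complex (x-1) (-b)) (Complex (x+1) b)"
  define T0 where "T0 = exp(-2*pi)"
  have T0: "0 \<le> T0" "T0 < 1" unfolding T0_def by auto
  have hol: "F holomorphic_on band b" and per: "\<forall>z\<in>band b. F (z+1) = F z + 1"
    using L unfolding lift_conformal_embedding_def by auto
  have holh: "h holomorphic_on band b"
    unfolding h_def using hol open_band by (intro holomorphic_intros holomorphic_deriv) auto
  have openS: "open S" unfolding S_def by (rule open_box)
  have connS: "connected S" unfolding S_def by (simp add: convex_connected)
  have Sband: "S \<subseteq> band b" unfolding S_def band_def by (auto simp: in_box_complex_iff)
  have zS: "z \<in> S" using z unfolding S_def x_def by (auto simp: in_box_complex_iff)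
  have q0: "q \<noteq> 0" unfolding q_def by simp
  have Ez: "E z = q" unfolding E_def q_def ..
  have Eneq: "E w \<noteq> q" if "w \<in> S - {z}" for w
  proof
    assume "E w = q"
    then obtain n :: int where n: "2*pi*\<i>*w = 2*pi*\<i>*z + (of_int (2 * n) * pi) * \<i>"
      unfolding E_def q_def exp_eq by blast
    moreover have "(of_int (2 * n) * pi) * \<i> = (2*pi*\<i>) * of_int n" by simp
    ultimately have "(2*pi*\<i>) * w = (2*pi*\<i>) * (z + of_int n)"
      by (simp only: distrib_left)
    then have wz: "w = z + of_int n" by (subst (asm) mult_cancel_left) simp
    then have "Re w = x + of_int n" by (simp add: x_def)
    moreover have "x - 1 < Re w" "Re w < x + 1" using that unfolding S_def by (auto simp: in_box_complex_iff)
    ultimately have "n = 0" by linarith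
    then show False using wz that by simp
  qed
  have holhS: "h holomorphic_on S - {z}" by (rule holomorphic_on_subset[OF holh]) (use Sband in blast)
  have holE: "E holomorphic_on S - {z}" unfolding E_def by (intro holomorphic_intros)
  have holf: "f holomorphic_on S - {z}"
    unfolding f_def K_def
    by (intro holomorphic_intros holhS holE) (use Eneq in auto)
  have dE: "(E has_field_derivative (2*pi*\<i>*q)) (at z)"
    unfolding E_def q_def by (auto intro!: derivative_eq_intros simp: algebra_simps)
  then have "((\<lambda>w. (E w - E z) / (w - z)) \<longlongrightarrow> 2*pi*\<i>*q) (at z)"
    by (simp add: has_field_derivative_iff)
  then have lim1: "((\<lambda>w. inverse ((E w - q) / (w - z))) \<longlongrightarrow> inverse (2*pi*\<i>*q)) (at z)"
    using q0 Ez by (intro tendsto_inverse) auto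
  have "isCont h z" using holh Sband zS open_band
    by (meson continuous_on_eq_continuous_at holomorphic_on_imp_continuous_on subsetD)
  then have limh: "(h \<longlongrightarrow> h z) (at z)" by (simp add: isCont_def)
  have "isCont E z" unfolding E_def by (intro continuous_intros)
  then have limE: "(E \<longlongrightarrow> q) (at z)" using Ez by (simp add: isCont_def)
  have lim2: "((\<lambda>w. h w * (pi*\<i>*(E w + q)) * inverse ((E w - q) / (w - z))) \<longlongrightarrow>
      h z * (pi*\<i>*(q + q)) * inverse (2*pi*\<i>*q)) (at z)"
    by (intro tendsto_intros limh limE lim1)
  have eqv: "h z * (pi*\<i>*(q + q)) * inverse (2*pi*\<i>*q) = h z" using q0 by (simp add: field_simps)
  have feq: "(\<lambda>w. f w * (w - z)) = (\<lambda>w. h w * (pi*\<i>*(E w + q)) * inverse ((E w - q) / (w - z)))"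
    by (rule ext) (simp add: f_def K_def inverse_divide)
  have res: "residue f z = h z"
    by (rule residue_simple'[OF openS zS holf]) (use lim2 eqv feq in simp)
  have ord: "Re a1 \<le> Re a3" "Im a1 \<le> Im a3" unfolding a1_def a3_def \<beta>_def using b2 by auto
  have cboxS: "cbox a1 a3 \<subseteq> S" unfolding a1_def a3_def S_def \<beta>_def
    by (auto simp: in_box_complex_iff in_cbox_complex_iff)
  have zbox: "z \<in> box a1 a3" unfolding a1_def a3_def \<beta>_def x_def using z by (auto simp: in_box_complex_iff)
  have pim: "path_image (rectpath a1 a3) \<subseteq> S - {z}"
    using path_image_rectpath_subset_cbox[OF ord] path_image_rectpath_inter_box[OF ord] cboxS zbox
    by blast
  have wn0: "\<forall>w. w \<notin> S \<longrightarrow> winding_number (rectpath a1 a3) w = 0"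
    using winding_number_rectpath_outside[OF ord] cboxS by blast
  have "contour_integral (rectpath a1 a3) f =
      2 * pi * \<i> * (\<Sum>p\<in>{z}. winding_number (rectpath a1 a3) p * residue f p)"
    by (rule Residue_theorem[OF openS connS _ holf _ _ pim wn0]) auto
  then have ci: "contour_integral (rectpath a1 a3) f = 2 * pi * \<i> * h z"
    using winding_number_rectpath[OF zbox] res by simp
  have bpos: "\<beta> > 1" unfolding \<beta>_def using b2 by simp
  have zIm: "Im z < \<beta> - 1" "- (\<beta> - 1) < Im z" using z unfolding \<beta>_def by auto
  have inS: "w \<in> S" if "Re w \<in> {x-1/2..x+1/2}" "Im w \<in> {-\<beta>..\<beta>}" for w
    using that unfolding S_def \<beta>_def by (auto simp: in_box_complex_iff)
  have rp: "rectpath a1 a3 = linepath a1 a2 +++ linepath a2 a3 +++ linepath a3 a4 +++ linepath a4 a1"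
    unfolding rectpath_def Let_def a1_def a2_def a3_def a4_def by simp
  have seg1: "closed_segment a1 a2 = {w. Im w = -\<beta> \<and> Re w \<in> {x-1/2..x+1/2}}"
    unfolding a1_def a2_def by (subst closed_segment_same_Im) (auto simp: closed_segment_eq_real_ivl)
  have seg2: "closed_segment a2 a3 = {w. Re w = x+1/2 \<and> Im w \<in> {-\<beta>..\<beta>}}"
    unfolding a2_def a3_def using bpos by (subst closed_segment_same_Re) (auto simp: closed_segment_eq_real_ivl)
  have seg3: "closed_segment a3 a4 = {w. Im w = \<beta> \<and> Re w \<in> {x-1/2..x+1/2}}"
    unfolding a3_def a4_def by (subst closed_segment_same_Im) (auto simp: closed_segment_eq_real_ivl)
  have seg4: "closed_segment a1 a4 = {w. Re w = x-1/2 \<and> Im w \<in> {-\<beta>..\<beta>}}"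
    unfolding a1_def a4_def using bpos by (subst closed_segment_same_Re) (auto simp: closed_segment_eq_real_ivl)
  have seg4': "closed_segment a4 a1 = closed_segment a1 a4" by (rule closed_segment_commute)
  have sub1: "closed_segment a1 a2 \<subseteq> S - {z}" unfolding seg1 using inS zIm bpos by force
  have sub2: "closed_segment a2 a3 \<subseteq> S - {z}" unfolding seg2 using inS by (force simp: x_def)
  have sub3: "closed_segment a3 a4 \<subseteq> S - {z}" unfolding seg3 using inS zIm bpos by force
  have sub4: "closed_segment a4 a1 \<subseteq> S - {z}" unfolding seg4' seg4 using inS by (force simp: x_def)
  have contf: "continuous_on (S - {z}) f" using holf by (rule holomorphic_on_imp_continuous_on)
  have intc1: "f contour_integrable_on linepath a1 a2"
    by (rule contour_integrable_continuous_linepath, rule continuous_on_subset[OF contf sub1])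
  have intc2: "f contour_integrable_on linepath a2 a3"
    by (rule contour_integrable_continuous_linepath, rule continuous_on_subset[OF contf sub2])
  have intc3: "f contour_integrable_on linepath a3 a4"
    by (rule contour_integrable_continuous_linepath, rule continuous_on_subset[OF contf sub3])
  have intc4: "f contour_integrable_on linepath a4 a1"
    by (rule contour_integrable_continuous_linepath, rule continuous_on_subset[OF contf sub4])
  define i1 where "i1 = contour_integral (linepath a1 a2) f"
  define i2 where "i2 = contour_integral (linepath a2 a3) f"
  define i3 where "i3 = contour_integral (linepath a3 a4) f"
  define i4 where "i4 = contour_integral (linepath a4 a1) f"
  have "(f has_contour_integral (i1 + (i2 + (i3 + i4)))) (rectpath a1 a3)"
    unfolding rp i1_def i2_def i3_def i4_def
    by (intro has_contour_integral_join has_contour_integral_integral intc1 intc2 intc3 intc4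
        valid_path_join valid_path_linepath) auto
  then have sum: "2 * pi * \<i> * h z = i1 + i2 + i3 + i4"
    using ci contour_integral_unique by (simp add: add.assoc)
  have fper: "f (w + 1) = f w" if "w \<in> band b" for w
    using deriv_periodic[OF L that] E_periodic[of w] unfolding f_def K_def h_def E_def by simp
  have I2: "i2 = \<i> * integral {-\<beta>..\<beta>} (\<lambda>t. f (Complex (x+1/2) t))"
    unfolding i2_def using bpos by (intro contour_integral_linepath_same_Re) (auto simp: a2_def a3_def)
  have "i4 = - contour_integral (linepath a1 a4) f"
    unfolding i4_def by (subst reversepath_linepath[symmetric], subst contour_integral_reversepath) auto
  also have "contour_integral (linepath a1 a4) f = \<i> * integral {-\<beta>..\<beta>} (\<lambda>t. f (Complex (x-1/2) t))"
    using bpos by (intro contour_integral_linepath_same_Re) (auto simp: a1_def a4_def)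
  finally have I4: "i4 = - (\<i> * integral {-\<beta>..\<beta>} (\<lambda>t. f (Complex (x-1/2) t)))" .
  have "integral {-\<beta>..\<beta>} (\<lambda>t. f (Complex (x+1/2) t)) = integral {-\<beta>..\<beta>} (\<lambda>t. f (Complex (x-1/2) t))"
  proof (rule integral_cong)
    fix t assume t: "t \<in> {-\<beta>..\<beta>}"
    have "Complex (x-1/2) t \<in> band b" using t unfolding band_def \<beta>_def by auto
    moreover have "Complex (x+1/2) t = Complex (x-1/2) t + 1" by (simp add: complex_eq_iff)
    ultimately show "f (Complex (x+1/2) t) = f (Complex (x-1/2) t)" using fper by metis
  qed
  then have i24: "i2 + i4 = 0" using I2 I4 by simp
  define B where "B = 19 * (pi * (2 * T0 / (1 - T0)))"
  have hbd: "norm (h w) \<le> 19" if "\<bar>Im w\<bar> \<le> b - 1" for w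
  proof -
    have "norm (deriv F w) < 18" using deriv_bound[OF L that] .
    moreover have "norm (deriv F w - 1) \<le> norm (deriv F w) + 1" using norm_triangle_ineq4[of "deriv F w" 1] by simp
    ultimately show ?thesis unfolding h_def by simp
  qed
  have nq: "norm q = exp (- (2 * pi * Im z))" unfolding q_def by simp
  have nE: "norm (E w) = exp (- (2 * pi * Im w))" for w unfolding E_def by simp
  have E0: "E w \<noteq> 0" for w unfolding E_def by simp
  have a1b: "a1 \<in> band b" unfolding a1_def band_def \<beta>_def using b2 by auto
  have a3b: "a3 \<in> band b" unfolding a3_def band_def \<beta>_def using b2 by auto
  have hb1: "(h has_contour_integral 0) (linepath a1 a2)"
    unfolding h_def by (rule hint_zero[OF L a1b]) (simp add: a1_def a2_def complex_eq_iff)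
  have hb3: "(h has_contour_integral 0) (linepath a3 a4)"
    unfolding h_def by (rule hint_zero[OF L a3b]) (simp add: a3_def a4_def complex_eq_iff)
  have Bpos: "0 \<le> B" unfolding B_def using T0 by auto
  have bd1: "norm (f w - pi * \<i> * h w) \<le> B" if w: "w \<in> closed_segment a1 a2" for w
  proof -
    have wS: "w \<in> S - {z}" using w sub1 by blast
    have Imw: "Im w = -\<beta>" using w seg1 by auto
    have Ew: "E w \<noteq> q" using Eneq wS .
    have eq: "f w - pi * \<i> * h w = h w * (pi * \<i> * (2 * q / (E w - q)))"
      using Ew unfolding f_def K_def by (simp add: field_simps)
    have "0 \<le> 2 * pi * (\<beta> - 1 + Im z)" using zIm by simp
    then have "- (2 * pi * Im z) \<le> -2*pi + - (2 * pi * Im w)" using Imw by (simp add: algebra_simps)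
    then have "norm q \<le> T0 * norm (E w)" unfolding nq nE T0_def exp_add[symmetric] by simp
    then have k: "norm (2 * q / (E w - q)) \<le> 2 * T0 / (1 - T0)" using K_bound T0 E0 by blast
    have hw: "norm (h w) \<le> 19" by (rule hbd) (use Imw b2 in \<open>simp add: \<beta>_def\<close>)
    have "norm (f w - pi * \<i> * h w) = norm (h w) * (pi * norm (2 * q / (E w - q)))"
      unfolding eq norm_mult by simp
    also have "\<dots> \<le> 19 * (pi * (2 * T0 / (1 - T0)))"
      using hw k by (intro mult_mono mult_left_mono) auto
    finally show ?thesis unfolding B_def .
  qed
  have bd3: "norm (f w + pi * \<i> * h w) \<le> B" if w: "w \<in> closed_segment a3 a4" for w
  proof -
    have wS: "w \<in> S - {z}" using w sub3 by blast
    have Imw: "Im w = \<beta>" using w seg3 by auto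
    have Ew: "E w \<noteq> q" using Eneq wS .
    have eq: "f w + pi * \<i> * h w = h w * (pi * \<i> * (2 * E w / (E w - q)))"
      using Ew unfolding f_def K_def by (simp add: field_simps)
    have "0 \<le> 2 * pi * (\<beta> - 1 - Im z)" using zIm by simp
    then have "- (2 * pi * Im w) \<le> -2*pi + - (2 * pi * Im z)" using Imw by (simp add: algebra_simps)
    then have "norm (E w) \<le> T0 * norm q" unfolding nq nE T0_def exp_add[symmetric] by simp
    then have k: "norm (2 * E w / (q - E w)) \<le> 2 * T0 / (1 - T0)" using K_bound T0 q0 by blast
    have k': "norm (2 * E w / (E w - q)) = norm (2 * E w / (q - E w))"
      by (simp add: norm_divide norm_minus_commute)
    have hw: "norm (h w) \<le> 19" by (rule hbd) (use Imw b2 in \<open>simp add: \<beta>_def\<close>)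
    have "norm (f w + pi * \<i> * h w) = norm (h w) * (pi * norm (2 * E w / (E w - q)))"
      unfolding eq norm_mult by simp
    also have "\<dots> \<le> 19 * (pi * (2 * T0 / (1 - T0)))"
      using hw k k' by (intro mult_mono mult_left_mono) auto
    finally show ?thesis unfolding B_def .
  qed
  have "((\<lambda>w. f w - pi * \<i> * h w) has_contour_integral (i1 - pi * \<i> * 0)) (linepath a1 a2)"
    unfolding i1_def by (intro has_contour_integral_diff has_contour_integral_lmul hb1 has_contour_integral_integral intc1)
  then have n1: "norm i1 \<le> B * norm (a2 - a1)"
    using has_contour_integral_bound_linepath Bpos bd1 by simp
  have "((\<lambda>w. f w + pi * \<i> * h w) has_contour_integral (i3 + pi * \<i> * 0)) (linepath a3 a4)"
    unfolding i3_def by (intro has_contour_integral_add has_contour_integral_lmul hb3 has_contour_integral_integral intc3)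
  then have n3: "norm i3 \<le> B * norm (a4 - a3)"
    using has_contour_integral_bound_linepath Bpos bd3 by simp
  have "a2 - a1 = 1" by (simp add: a1_def a2_def complex_eq_iff)
  then have l1: "norm (a2 - a1) = 1" by simp
  have "a4 - a3 = -1" by (simp add: a3_def a4_def complex_eq_iff)
  then have l3: "norm (a4 - a3) = 1" by simp
  have "2 * pi * norm (h z) = norm (2 * pi * \<i> * h z)" by (simp add: norm_mult)
  also have "\<dots> = norm (i1 + i3)"
  proof -
    have "i1 + i2 + i3 + i4 = i1 + i3 + (i2 + i4)" by (simp add: algebra_simps)
    also have "\<dots> = i1 + i3" using i24 by simp
    finally have "2 * pi * \<i> * h z = i1 + i3" using sum by simp
    then show ?thesis by (simp only:)
  qed
  also have "\<dots> \<le> norm i1 + norm i3" by (rule norm_triangle_ineq)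
  also have "\<dots> \<le> 2 * B" using n1 n3 l1 l3 by simp
  finally have "2 * pi * norm (h z) \<le> 2 * B" .
  moreover have eB: "2 * B = (2*pi) * (38 * T0 / (1 - T0))" unfolding B_def by (simp add: algebra_simps)
  ultimately have "(2*pi) * norm (h z) \<le> (2*pi) * (38 * T0 / (1 - T0))" by simp
  then have "norm (h z) \<le> 38 * T0 / (1 - T0)" by (rule mult_left_le_imp_le) simp
  then show ?thesis unfolding h_def T0_def by simp
qed


lemma T0_small: "38 * exp(-2*pi) / (1 - exp(-2*pi)) \<le> (1/2 :: real)"
proof -
  have "(1 + 6 / real 8) ^ 8 \<le> exp 6" by (rule exp_ge_one_plus_x_over_n_power_n) auto
  then have e6: "87 \<le> exp (6::real)" by (simp add: power_def)
  have "exp (6::real) \<le> exp (2*pi)" using pi_gt3 by simp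
  then have e: "87 \<le> exp (2*pi)" using e6 by linarith
  have T: "exp(-2*pi) = inverse (exp (2*pi))" by (simp add: exp_minus[symmetric])
  have "exp(-2*pi) \<le> 1/87" unfolding T using e by (simp add: inverse_eq_divide field_simps)
  moreover have "exp(-2*pi) < 1" by simp
  moreover have "0 \<le> exp (-2*pi)" by simp
  ultimately show ?thesis by (simp add: field_simps)
qed

lemma derivg_small:
  fixes F :: "complex \<Rightarrow> complex"
  assumes "b > 2" "lift_conformal_embedding b F" "\<bar>Im z\<bar> < b - 2"
  shows "norm (deriv F z - 1) \<le> 1/2"
  using decay[OF assms] T0_small by linarith

lemma key_osc:
  fixes F :: "complex \<Rightarrow> complex"
  assumes b2: "b > 2" and L: "lift_conformal_embedding b F" and I: "bdd_interval I"
    and m: "cyl_modulus I = 1" and sub: "straight_cyl I \<subseteq> band (b - 2)"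
    and z: "z \<in> straight_cyl I" and w: "w \<in> straight_cyl I"
  shows "Im (F z) \<le> Im (F w) + 2"
proof -
  have hol: "F holomorphic_on band b" and per: "\<forall>z\<in>band b. F (z+1) = F z + 1"
    using L unfolding lift_conformal_embedding_def by auto
  have bd: "bdd_above I" "bdd_below I" using I unfolding bdd_interval_def
    by (auto simp: bounded_imp_bdd_above bounded_imp_bdd_below)
  have diff: "s - t \<le> 1" if "s \<in> I" "t \<in> I" for s t
    using cSup_upper[OF that(1) bd(1)] cInf_lower[OF that(2) bd(2)] m unfolding cyl_modulus_def by linarith
  have bb: "band (b - 2) \<subseteq> band b" unfolding band_def by auto
  have convT: "convex (straight_cyl I)"
  proof -
    have "convex I" using I unfolding bdd_interval_def by (simp add: is_interval_convex_1)
    then have "convex (Im -` I)" by (intro convex_linear_vimage) (auto intro: bounded_linear.linear bounded_linear_Im)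
    moreover have "Im -` I = straight_cyl I" unfolding straight_cyl_def by auto
    ultimately show ?thesis by simp
  qed
  define n where "n = \<lfloor>Re z - Re w\<rfloor>"
  define w' where "w' = w + of_int n"
  have wb: "w \<in> band b" using w sub bb by blast
  have zb: "z \<in> band b" using z sub bb by blast
  have Fw': "F w' = F w + of_int n" unfolding w'_def by (rule F_shift_int[OF per wb])
  have w'T: "w' \<in> straight_cyl I" using w unfolding w'_def straight_cyl_def by simp
  have seg: "closed_segment w' z \<subseteq> straight_cyl I" by (rule closed_segment_subset[OF w'T z convT])
  have "norm ((F z - z) - (F w' - w')) \<le> 1/2 * norm (z - w')"
  proof (rule field_differentiable_bound[OF convex_closed_segment, where f' = "\<lambda>u. deriv F u - 1"])
    fix u assume u: "u \<in> closed_segment w' z"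
    then have uT: "u \<in> band (b - 2)" using seg sub by blast
    then have "u \<in> band b" using bb by blast
    then have "(F has_field_derivative deriv F u) (at u within closed_segment w' z)"
      using hol open_band by (intro holomorphic_derivI)
    then show "((\<lambda>u. F u - u) has_field_derivative deriv F u - 1) (at u within closed_segment w' z)"
      by (auto intro!: derivative_eq_intros)
    show "norm (deriv F u - 1) \<le> 1/2"
      using uT by (intro derivg_small[OF b2 L]) (simp add: band_def)
  qed auto
  moreover have "norm (z - w') \<le> 2"
  proof -
    have "Re (z - w') = (Re z - Re w) - of_int \<lfloor>Re z - Re w\<rfloor>" unfolding w'_def n_def by simp
    then have r: "\<bar>Re (z - w')\<bar> \<le> 1"
      using of_int_floor_le[of "Re z - Re w"] real_of_int_floor_gt_diff_one[of "Re z - Re w"] by linarith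
    have "Im z \<in> I" "Im w \<in> I" using z w unfolding straight_cyl_def by auto
    then have "\<bar>Im (z - w')\<bar> \<le> 1" unfolding w'_def using diff by (simp add: abs_le_iff)
    then show ?thesis using cmod_le[of "z - w'"] r by linarith
  qed
  ultimately have g: "norm ((F z - z) - (F w' - w')) \<le> 1" by linarith
  have "Im ((F z - z) - (F w' - w')) \<le> 1" using g abs_Im_le_cmod[of "(F z - z) - (F w' - w')"] by linarith
  moreover have "Im (z - w') \<le> 1"
  proof -
    have "Im z \<in> I" "Im w \<in> I" using z w unfolding straight_cyl_def by auto
    then show ?thesis unfolding w'_def using diff by simp
  qed
  moreover have "Im (F w') = Im (F w)" using Fw' by simp
  ultimately show ?thesis by simp
qed

theorem lemma6p2:
  fixes b :: real and F :: "complex \<Rightarrow> complex"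
  assumes "b > 2"
    and "lift_conformal_embedding b F"
  shows "\<forall>I. bdd_interval I \<and> cyl_modulus I = 1 \<and> straight_cyl I \<subseteq> band (b - 2) \<longrightarrow>
           (\<exists>J. bdd_interval J \<and> cyl_modulus J \<le> 2 \<and> F ` straight_cyl I \<subseteq> straight_cyl J)"
proof (intro allI impI)
  fix I assume H: "bdd_interval I \<and> cyl_modulus I = 1 \<and> straight_cyl I \<subseteq> band (b - 2)"
  then have I: "bdd_interval I" and m: "cyl_modulus I = 1" and sub: "straight_cyl I \<subseteq> band (b - 2)" by auto
  define Y where "Y = (\<lambda>z. Im (F z)) ` straight_cyl I"
  obtain t where t: "t \<in> I" using I unfolding bdd_interval_def by auto
  have w0: "Complex 0 t \<in> straight_cyl I" using t unfolding straight_cyl_def by simp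
  have Yne: "Y \<noteq> {}" unfolding Y_def using w0 by blast
  have key: "y \<le> y' + 2" if "y \<in> Y" "y' \<in> Y" for y y'
    using that key_osc[OF assms I m sub] unfolding Y_def by blast
  have bdb: "bdd_below Y"
  proof (rule bdd_belowI)
    fix y assume "y \<in> Y"
    moreover have "Im (F (Complex 0 t)) \<in> Y" unfolding Y_def using w0 by blast
    ultimately show "Im (F (Complex 0 t)) - 2 \<le> y" using key by force
  qed
  define m0 where "m0 = Inf Y"
  have Ylow: "m0 \<le> y" if "y \<in> Y" for y unfolding m0_def using cInf_lower[OF that bdb] .
  have Yup: "y \<le> m0 + 2" if "y \<in> Y" for y
  proof -
    have "y - 2 \<le> m0" unfolding m0_def
      by (rule cInf_greatest[OF Yne]) (use key that in force)
    then show ?thesis by simp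
  qed
  show "\<exists>J. bdd_interval J \<and> cyl_modulus J \<le> 2 \<and> F ` straight_cyl I \<subseteq> straight_cyl J"
  proof (intro exI conjI)
    show "bdd_interval {m0..m0+2}" unfolding bdd_interval_def by auto
    show "cyl_modulus {m0..m0+2} \<le> 2" unfolding cyl_modulus_def by simp
    show "F ` straight_cyl I \<subseteq> straight_cyl {m0..m0+2}"
      using Ylow Yup unfolding Y_def straight_cyl_def by auto
  qed
qed

end
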